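(* Let $n\ge 0$ be an integer, $\kappa\in\mathbb{R}$, $T>0$ and $0<|\phi|<1/2$ satisfy $$\coth\big((\tfrac12-\phi)T\big)=\kappa-\coth\big((\tfrac12+\phi)T\big),$$ and set $\tau=(2n+1)T/2$. Define $$\gamma_1=\frac{\coth^2(\tau-(n-\phi)T)-1}{[\kappa-\coth(\tau-(n-\phi)T)]^2-1},\qquad \gamma_2=\frac{\coth^2(\tau-(n+\phi)T)-1}{[\kappa-\coth(\tau-(n+\phi)T)]^2-1}.$$ Then $\gamma_1\gamma_2=1$ and $\beta:=\gamma_1+\gamma_2>2$; moreover $\widehat D_s(\lambda)=\lambda^{2n}(\lambda-\gamma_1)(\lambda-\gamma_2)-(1-\gamma_1)(1-\gamma_2)$ factors as $(\lambda-1)\widehat H_s(\lambda)$ with $$\widehat H_s(\lambda)=\lambda^{2n+1}+(1-\beta)\lambda^{2n}+(2-\beta)\sum_{i=0}^{2n-1}\lambda^i,$$ and $\widehat D_s$ has a real root strictly greater than $1$. *)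

theory Defs
  imports Complex_Main
begin

definition coth :: "real \<Rightarrow> real" where
  "coth x = cosh x / sinh x"

end

theory Submission
  imports Defs
begin

lemma coth_sq: assumes "x > 0" shows "(coth x)\<^sup>2 - 1 = 1 / (sinh x)\<^sup>2"
proof -
  have "sinh x > 0" using assms sinh_real_pos_iff by blast
  thus ?thesis unfolding coth_def using cosh_square_eq[of x]
    by (simp add: power_divide field_simps)
qed

theorem mainTheorem4:
  fixes n :: nat and \<kappa> T \<phi> :: real
  assumes hT: "T > 0"
    and h\<phi>: "0 < \<bar>\<phi>\<bar>" "\<bar>\<phi>\<bar> < 1/2"
    and heq: "coth ((1/2 - \<phi>) * T) = \<kappa> - coth ((1/2 + \<phi>) * T)"
  defines "\<tau> \<equiv> (2 * real n + 1) * T / 2"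
  defines "\<gamma>\<^sub>1 \<equiv> ((coth (\<tau> - (real n - \<phi>) * T))\<^sup>2 - 1) /
                    ((\<kappa> - coth (\<tau> - (real n - \<phi>) * T))\<^sup>2 - 1)"
  defines "\<gamma>\<^sub>2 \<equiv> ((coth (\<tau> - (real n + \<phi>) * T))\<^sup>2 - 1) /
                    ((\<kappa> - coth (\<tau> - (real n + \<phi>) * T))\<^sup>2 - 1)"
  defines "\<beta> \<equiv> \<gamma>\<^sub>1 + \<gamma>\<^sub>2"
  defines "D \<equiv> (\<lambda>x::real. x ^ (2 * n) * (x - \<gamma>\<^sub>1) * (x - \<gamma>\<^sub>2) - (1 - \<gamma>\<^sub>1) * (1 - \<gamma>\<^sub>2))"
  defines "H \<equiv> (\<lambda>x::real. x ^ (2 * n + 1) + (1 - \<beta>) * x ^ (2 * n)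
                         + (2 - \<beta>) * (\<Sum>i<2 * n. x ^ i))"
  shows "\<gamma>\<^sub>1 * \<gamma>\<^sub>2 = 1 \<and> \<beta> > 2 \<and> (\<forall>x. D x = (x - 1) * H x)
         \<and> (\<exists>x>1. D x = 0)"
proof -
  define a where "a = (1/2 + \<phi>) * T"
  define b where "b = (1/2 - \<phi>) * T"
  have a: "a > 0" using hT h\<phi> unfolding a_def by (intro mult_pos_pos) auto
  have b: "b > 0" using hT h\<phi> unfolding b_def by (intro mult_pos_pos) auto
  have ab: "a \<noteq> b" using hT h\<phi> unfolding a_def b_def by auto
  have e1: "\<tau> - (real n - \<phi>) * T = a" unfolding \<tau>_def a_def by (simp add: algebra_simps)
  have e2: "\<tau> - (real n + \<phi>) * T = b" unfolding \<tau>_def b_def by (simp add: algebra_simps)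
  have k: "\<kappa> = coth a + coth b" using heq unfolding a_def b_def by simp
  have sa: "sinh a > 0" using a sinh_real_pos_iff by blast
  have sb: "sinh b > 0" using b sinh_real_pos_iff by blast
  have g1: "\<gamma>\<^sub>1 = (sinh b / sinh a)\<^sup>2"
    unfolding \<gamma>\<^sub>1_def e1 k using coth_sq[OF a] coth_sq[OF b] sa sb
    by (simp add: power_divide)
  have g2: "\<gamma>\<^sub>2 = (sinh a / sinh b)\<^sup>2"
    unfolding \<gamma>\<^sub>2_def e2 k using coth_sq[OF a] coth_sq[OF b] sa sb
    by (simp add: power_divide)
  have prod: "\<gamma>\<^sub>1 * \<gamma>\<^sub>2 = 1" unfolding g1 g2 using sa sb by (simp add: power_divide)
  have pos1: "\<gamma>\<^sub>1 > 0" unfolding g1 using sa sb by simp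
  have pos2: "\<gamma>\<^sub>2 > 0" unfolding g2 using sa sb by simp
  have ne: "\<gamma>\<^sub>1 \<noteq> 1"
  proof
    assume "\<gamma>\<^sub>1 = 1"
    hence "(sinh b)\<^sup>2 = (sinh a)\<^sup>2" unfolding g1 using sa by (simp add: power_divide)
    hence "sinh b = sinh a" using sa sb by (simp add: power2_eq_iff_nonneg)
    thus False using ab sinh_real_less_iff[of a b] sinh_real_less_iff[of b a]
      by (cases "a < b") auto
  qed
  have "(\<gamma>\<^sub>1 - 1)\<^sup>2 > 0" using ne by simp
  hence "\<gamma>\<^sub>1 * (\<beta> - 2) > 0" unfolding \<beta>_def using prod
    by (simp add: power2_eq_square algebra_simps)
  hence beta: "\<beta> > 2" using pos1 by (simp add: zero_less_mult_iff)
  have fac: "\<forall>x. D x = (x - 1) * H x"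
  proof
    fix x :: real
    have "(x - 1) * (\<Sum>i<2 * n. x ^ i) = x ^ (2*n) - 1" using power_diff_1_eq[of x "2*n"] by simp
    hence "(x - 1) * H x = (x - 1) * x ^ (2*n+1) + (1 - \<beta>) * ((x - 1) * x ^ (2*n)) + (2 - \<beta>) * ((x - 1) * (\<Sum>i<2 * n. x ^ i))"
      unfolding H_def by (simp only: algebra_simps)
    also have "\<dots> = x ^ (2*n+2) - \<beta> * x^(2*n+1) + x^(2*n) - (2 - \<beta>)"
      unfolding \<open>(x - 1) * (\<Sum>i<2 * n. x ^ i) = x ^ (2*n) - 1\<close> by (simp add: algebra_simps)
    also have "\<dots> = D x" unfolding D_def \<beta>_def using prod
      by (simp add: algebra_simps power_add power2_eq_square)
    finally show "D x = (x - 1) * H x" ..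
  qed
  have H1: "H 1 < 0"
  proof -
    have "H 1 = (2 - \<beta>) * (2 * real n + 1)" unfolding H_def by (simp add: algebra_simps)
    moreover have "(2 - \<beta>) * (2 * real n + 1) < 0" using beta by (intro mult_neg_pos) auto
    ultimately show ?thesis by simp
  qed
  have Db: "D \<beta> > 0"
  proof -
    have "D \<beta> = \<beta> ^ (2*n) * \<gamma>\<^sub>2 * \<gamma>\<^sub>1 - (2 - \<beta>)" unfolding D_def \<beta>_def using prod
      by (simp add: algebra_simps)
    also have "\<dots> = \<beta> ^ (2*n) + (\<beta> - 2)" using prod by (simp add: algebra_simps)
    finally have Deq: "D \<beta> = \<beta> ^ (2*n) + (\<beta> - 2)" .
    have "\<beta> ^ (2*n) > 0" using beta by simp
    thus ?thesis using beta Deq by linarith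
  qed
  have Hb: "H \<beta> > 0" using Db fac beta 
  proof -
    have "0 < (\<beta> - 1) * H \<beta>" using Db fac by simp
    moreover have "\<beta> - 1 > 0" using beta by simp
    ultimately show ?thesis by (simp add: zero_less_mult_iff)
  qed
  have cont: "continuous_on {1..\<beta>} H" unfolding H_def by (intro continuous_intros)
  obtain x where x: "x \<ge> 1" "x \<le> \<beta>" "H x = 0"
    using IVT'[of H 1 0 \<beta>, OF less_imp_le[OF H1] less_imp_le[OF Hb] _ cont] beta by auto
  have "x \<noteq> 1" using x H1 by auto
  hence "x > 1" "D x = 0" using x fac by auto
  thus ?thesis using prod beta fac by blast
qed

end
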